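(* Let $\Sigma=\{\sigma_{\mathbf{a}|\mathbf{x}}\}$ be a no-signaling assemblage on $\mathbb{C}^d$ and let $R_{\mathbf{a}|\mathbf{x}}$ denote the orthogonal projection onto $\mathrm{Im}(\sigma_{\mathbf{a}|\mathbf{x}})$. Then an LHS part can be subtracted from $\Sigma$ if and only if there exists a local deterministic box $L$ such that $\det\big(\prod_{\mathbf{a}|\mathbf{x}\in I_L}R_{\mathbf{a}|\mathbf{x}}-\mathbb{1}\big)=0$ (the product taken in any fixed order).
   Context: Fix $n\ge 1$, integers $\mathcal{A}_i,\mathcal{X}_i\ge 1$ and $d\ge1$; write $\mathbf{a}|\mathbf{x}=a_1\dots a_n|x_1\dots x_n$ with $a_i\in\{0,\dots,\mathcal{A}_i-1\}$, $x_i\in\{0,\dots,\mathcal{X}_i-1\}$. A no-signaling assemblage is a collection of positive semidefinite operators $\sigma_{\mathbf{a}|\mathbf{x}}$ on $\mathbb{C}^d$ with $\sum_{\mathbf{a}}\sigma_{\mathbf{a}|\mathbf{x}}=\rho_B$ for all $\mathbf{x}$ ($\rho_B$ a fixed density operator) and such that for every $I=\{i_1,\dots,i_s\}\subset\{1,\dots,n\}$, $1\le s<n$, the sum $\sum_{a_j:\,j\notin I}\sigma_{\mathbf{a}|\mathbf{x}}$ depends only on $a_{i_k},x_{i_k}$ ($k=1,\dots,s$). A local deterministic box $L$ is given by functions $f_i:\{0,\dots,\mathcal{X}_i-1\}\to\{0,\dots,\mathcal{A}_i-1\}$ via $p_L(\mathbf{a}|\mathbf{x})=\prod_i\delta_{a_i,f_i(x_i)}$;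 $I_L=\{\mathbf{a}|\mathbf{x}:p_L(\mathbf{a}|\mathbf{x})\ne0\}$. "An LHS part can be subtracted from $\Sigma$" means: there exist $\epsilon>0$, a unit vector $|\psi\rangle\in\mathbb{C}^d$ and a local deterministic box $L$ such that $\sigma_{\mathbf{a}|\mathbf{x}}-\epsilon\, p_L(\mathbf{a}|\mathbf{x})|\psi\rangle\langle\psi|\ge0$ for all $\mathbf{a}|\mathbf{x}$. *)

theory Defs
  imports "Jordan_Normal_Form.Schur_Decomposition" "Jordan_Normal_Form.Determinant"
begin

definition psd :: "nat \<Rightarrow> complex mat \<Rightarrow> bool" where
  "psd d M \<longleftrightarrow> M \<in> carrier_mat d d \<and> mat_adjoint M = M \<and>
     (\<forall>v \<in> carrier_vec d. Im ((M *\<^sub>v v) \<bullet>c v) = 0 \<and> Re ((M *\<^sub>v v) \<bullet>c v) \<ge> 0)"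

definition mtrace :: "complex mat \<Rightarrow> complex" where
  "mtrace M = (\<Sum>i<dim_row M. M $$ (i,i))"

definition density_op :: "nat \<Rightarrow> complex mat \<Rightarrow> bool" where
  "density_op d M \<longleftrightarrow> psd d M \<and> mtrace M = 1"

definition mat_image :: "nat \<Rightarrow> complex mat \<Rightarrow> complex vec set" where
  "mat_image d M = {M *\<^sub>v v | v. v \<in> carrier_vec d}"

definition orth_proj_onto_image :: "nat \<Rightarrow> complex mat \<Rightarrow> complex mat \<Rightarrow> bool" where
  "orth_proj_onto_image d M P \<longleftrightarrow> P \<in> carrier_mat d d \<and> P * P = P \<and>
     mat_adjoint P = P \<and> mat_image d P = mat_image d M"

definition outer :: "nat \<Rightarrow> complex vec \<Rightarrow> complex mat" where
  "outer d psi = mat d d (\<lambda>(i,j). psi $ i * cnj (psi $ j))"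

definition msum :: "nat \<Rightarrow> ('i \<Rightarrow> complex mat) \<Rightarrow> 'i set \<Rightarrow> complex mat" where
  "msum d F S = mat d d (\<lambda>(i,j). \<Sum>s\<in>S. F s $$ (i,j))"

(* index strings a = a_1..a_n (0-based: positions 0..n-1) with entries below bounds B *)
definition valid_idx :: "nat \<Rightarrow> (nat \<Rightarrow> nat) \<Rightarrow> nat list \<Rightarrow> bool" where
  "valid_idx n B a \<longleftrightarrow> length a = n \<and> (\<forall>i<n. a ! i < B i)"

definition no_signaling_assemblage ::
  "nat \<Rightarrow> (nat \<Rightarrow> nat) \<Rightarrow> (nat \<Rightarrow> nat) \<Rightarrow> nat \<Rightarrow> (nat list \<Rightarrow> nat list \<Rightarrow> complex mat) \<Rightarrow> bool" where
  "no_signaling_assemblage n A X d \<sigma> \<longleftrightarrow>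
     (\<forall>a x. valid_idx n A a \<longrightarrow> valid_idx n X x \<longrightarrow> psd d (\<sigma> a x)) \<and>
     (\<exists>\<rho>. density_op d \<rho> \<and>
        (\<forall>x. valid_idx n X x \<longrightarrow> msum d (\<lambda>a. \<sigma> a x) {a. valid_idx n A a} = \<rho>)) \<and>
     (\<forall>I. I \<subseteq> {0..<n} \<longrightarrow> 1 \<le> card I \<longrightarrow> card I < n \<longrightarrow>
        (\<forall>a x a' x'. valid_idx n A a \<longrightarrow> valid_idx n X x \<longrightarrow>
                    valid_idx n A a' \<longrightarrow> valid_idx n X x' \<longrightarrow>
                    (\<forall>i\<in>I. a ! i = a' ! i \<and> x ! i = x' ! i) \<longrightarrow>
           msum d (\<lambda>b. \<sigma> b x) {b. valid_idx n A b \<and> (\<forall>i\<in>I. b ! i = a ! i)} =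
           msum d (\<lambda>b. \<sigma> b x') {b. valid_idx n A b \<and> (\<forall>i\<in>I. b ! i = a' ! i)}))"

(* local deterministic box given by f i : {0..<X i} -> {0..<A i} *)
definition local_det :: "nat \<Rightarrow> (nat \<Rightarrow> nat) \<Rightarrow> (nat \<Rightarrow> nat) \<Rightarrow> (nat \<Rightarrow> nat \<Rightarrow> nat) \<Rightarrow> bool" where
  "local_det n A X f \<longleftrightarrow> (\<forall>i<n. \<forall>xi<X i. f i xi < A i)"

definition p_L :: "nat \<Rightarrow> (nat \<Rightarrow> nat \<Rightarrow> nat) \<Rightarrow> nat list \<Rightarrow> nat list \<Rightarrow> complex" where
  "p_L n f a x = (if \<forall>i<n. a ! i = f i (x ! i) then 1 else 0)"

definition I_L :: "nat \<Rightarrow> (nat \<Rightarrow> nat) \<Rightarrow> (nat \<Rightarrow> nat) \<Rightarrow> (nat \<Rightarrow> nat \<Rightarrow> nat) \<Rightarrow> (nat list \<times> nat list) set" where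
  "I_L n A X f = {(a,x). valid_idx n A a \<and> valid_idx n X x \<and> p_L n f a x \<noteq> 0}"

definition LHS_subtractable ::
  "nat \<Rightarrow> (nat \<Rightarrow> nat) \<Rightarrow> (nat \<Rightarrow> nat) \<Rightarrow> nat \<Rightarrow> (nat list \<Rightarrow> nat list \<Rightarrow> complex mat) \<Rightarrow> bool" where
  "LHS_subtractable n A X d \<sigma> \<longleftrightarrow>
     (\<exists>\<epsilon>::real. \<epsilon> > 0 \<and> (\<exists>psi \<in> carrier_vec d. psi \<bullet>c psi = 1 \<and>
       (\<exists>f. local_det n A X f \<and>
          (\<forall>a x. valid_idx n A a \<longrightarrow> valid_idx n X x \<longrightarrow>
              psd d (\<sigma> a x - (complex_of_real \<epsilon> * p_L n f a x) \<cdot>\<^sub>m outer d psi)))))"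

definition mprod_list :: "nat \<Rightarrow> complex mat list \<Rightarrow> complex mat" where
  "mprod_list d Ms = foldr (\<lambda>M P. M * P) Ms (1\<^sub>m d)"

end

theory Submission
  imports Defs
begin

lemma ipc_add_l: "u \<in> carrier_vec n \<Longrightarrow> v \<in> carrier_vec n \<Longrightarrow> w \<in> carrier_vec n \<Longrightarrow>
  (u + v) \<bullet>c w = u \<bullet>c w + v \<bullet>c (w::complex vec)"
  by (simp add: add_scalar_prod_distrib[of _ n])

lemma ipc_minus_l: "u \<in> carrier_vec n \<Longrightarrow> v \<in> carrier_vec n \<Longrightarrow> w \<in> carrier_vec n \<Longrightarrow>
  (u - v) \<bullet>c w = u \<bullet>c w - v \<bullet>c (w::complex vec)"
  by (simp add: minus_scalar_prod_distrib[of _ n])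

lemma ipc_add_r: "u \<in> carrier_vec n \<Longrightarrow> v \<in> carrier_vec n \<Longrightarrow> w \<in> carrier_vec n \<Longrightarrow>
  u \<bullet>c (v + w) = u \<bullet>c v + u \<bullet>c (w::complex vec)"
  by (simp add: conjugate_add_vec[of _ n] scalar_prod_add_distrib[of _ n])

lemma ipc_smult_l: "u \<in> carrier_vec n \<Longrightarrow> w \<in> carrier_vec n \<Longrightarrow>
  (k \<cdot>\<^sub>v u) \<bullet>c w = k * (u \<bullet>c (w::complex vec))"
  by simp

lemma ipc_smult_r: "u \<in> carrier_vec n \<Longrightarrow> w \<in> carrier_vec n \<Longrightarrow>
  u \<bullet>c (k \<cdot>\<^sub>v w) = cnj k * (u \<bullet>c (w::complex vec))"
  by (simp add: conjugate_smult_vec)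

lemma ipc_swap: "u \<in> carrier_vec n \<Longrightarrow> w \<in> carrier_vec n \<Longrightarrow>
  u \<bullet>c w = cnj (w \<bullet>c (u::complex vec))"
proof -
  assume u: "u \<in> carrier_vec n" and w: "w \<in> carrier_vec n"
  have "conjugate (w \<bullet>c u) = conjugate w \<bullet> u"
    using conjugate_sprod_vec[of w n "conjugate u"] u w by simp
  also have "\<dots> = u \<bullet>c w" using conjugate_vec_sprod_comm[OF u w] by simp
  finally show ?thesis by simp
qed

lemma ipc_minus_r: "u \<in> carrier_vec n \<Longrightarrow> v \<in> carrier_vec n \<Longrightarrow> w \<in> carrier_vec n \<Longrightarrow>
  u \<bullet>c (v - w) = u \<bullet>c v - u \<bullet>c (w::complex vec)"
proof -
  assume a: "u \<in> carrier_vec n" "v \<in> carrier_vec n" "w \<in> carrier_vec n"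
  have "u \<bullet>c (v - w) = cnj ((v - w) \<bullet>c u)" by (rule ipc_swap[of _ n], insert a, auto)
  also have "\<dots> = cnj (v \<bullet>c u) - cnj (w \<bullet>c u)" using a by (simp add: ipc_minus_l[of _ n])
  also have "\<dots> = u \<bullet>c v - u \<bullet>c w" using a by (simp add: ipc_swap[of u n])
  finally show ?thesis .
qed

lemma ipc_self: "Im (v \<bullet>c (v::complex vec)) = 0 \<and> Re (v \<bullet>c v) \<ge> 0"
  using conjugate_square_ge_0_vec[of v] by (simp add: less_eq_complex_def)

lemma ipc_self_real: "v \<bullet>c (v::complex vec) = of_real (Re (v \<bullet>c v))"
  using ipc_self[of v] by (simp add: complex_eq_iff)

lemma adjoint_carrier: "M \<in> carrier_mat n n \<Longrightarrow> mat_adjoint M \<in> carrier_mat n n"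
  unfolding mat_adjoint_def by auto

lemma adjoint_index: "M \<in> carrier_mat n n \<Longrightarrow> i < n \<Longrightarrow> j < n \<Longrightarrow>
   mat_adjoint M $$ (i,j) = cnj (M $$ (j,i))"
  unfolding mat_adjoint_def by (auto simp: mat_of_rows_def)

lemma hermitian_index: "M \<in> carrier_mat n n \<Longrightarrow> mat_adjoint M = M \<Longrightarrow> i < n \<Longrightarrow> j < n \<Longrightarrow>
   M $$ (i,j) = cnj (M $$ (j,i))"
proof -
  assume a: "M \<in> carrier_mat n n" "mat_adjoint M = M" "i < n" "j < n"
  have e: "mat_adjoint M $$ (i,j) = cnj (M $$ (j,i))" by (rule adjoint_index, insert a, auto)
  show ?thesis using e[unfolded a(2)] .
qed

lemma hermitian_iff: "(M::complex mat) \<in> carrier_mat n n \<Longrightarrow>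
   mat_adjoint M = M \<longleftrightarrow> (\<forall>i<n. \<forall>j<n. M $$ (i,j) = cnj (M $$ (j,i)))"
proof (intro iffI allI impI)
  fix i j assume "M \<in> carrier_mat n n" "mat_adjoint M = M" "i < n" "j < n"
  then show "M $$ (i,j) = cnj (M $$ (j,i))" by (rule hermitian_index)
next
  assume M: "M \<in> carrier_mat n n" and h: "\<forall>i<n. \<forall>j<n. M $$ (i,j) = cnj (M $$ (j,i))"
  show "mat_adjoint M = M"
  proof (rule eq_matI)
    fix i j assume i: "i < dim_row M" and j: "j < dim_col M"
    then have ij: "i < n" "j < n" using M by auto
    have "mat_adjoint M $$ (i,j) = cnj (M $$ (j,i))" by (rule adjoint_index[OF M ij])
    also have "cnj (M $$ (j,i)) = M $$ (i,j)" using h ij by (metis complex_cnj_cnj)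
    finally show "mat_adjoint M $$ (i,j) = M $$ (i,j)" .
  qed (insert M adjoint_carrier[OF M], auto)
qed

lemma adjoint_ipc: assumes M: "(M::complex mat) \<in> carrier_mat n n"
  and u: "u \<in> carrier_vec n" and w: "w \<in> carrier_vec n"
  shows "(M *\<^sub>v u) \<bullet>c w = u \<bullet>c (mat_adjoint M *\<^sub>v w)"
proof -
  have ex: "\<And>x y::complex vec. x \<in> carrier_vec n \<Longrightarrow> y \<in> carrier_vec n \<Longrightarrow> x \<bullet>c y = (\<Sum>i<n. x $ i * cnj (y $ i))"
    by (auto simp: scalar_prod_def lessThan_atLeast0)
  have mv: "\<And>(N::complex mat) x i. N \<in> carrier_mat n n \<Longrightarrow> x \<in> carrier_vec n \<Longrightarrow> i < n \<Longrightarrow>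
      (N *\<^sub>v x) $ i = (\<Sum>j<n. N $$ (i,j) * x $ j)"
    by (auto simp: scalar_prod_def mult_mat_vec_def row_def lessThan_atLeast0)
  have rw: "\<And>(N::complex mat) x i. N \<in> carrier_mat n n \<Longrightarrow> x \<in> carrier_vec n \<Longrightarrow> i < n \<Longrightarrow>
      row N i \<bullet> x = (\<Sum>j<n. N $$ (i,j) * x $ j)"
    by (auto simp: scalar_prod_def row_def lessThan_atLeast0)
  have "(M *\<^sub>v u) \<bullet>c w = (\<Sum>i<n. (\<Sum>j<n. M $$ (i,j) * u $ j) * cnj (w $ i))"
    using M u w by (simp add: ex mv rw)
  also have "\<dots> = (\<Sum>i<n. \<Sum>j<n. M $$ (i,j) * u $ j * cnj (w $ i))"
    by (simp only: sum_distrib_right)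
  also have "\<dots> = (\<Sum>j<n. \<Sum>i<n. M $$ (i,j) * u $ j * cnj (w $ i))"
    by (rule sum.swap)
  also have "\<dots> = (\<Sum>j<n. u $ j * cnj (\<Sum>i<n. mat_adjoint M $$ (j,i) * w $ i))"
  proof (rule sum.cong[OF refl])
    fix j assume j: "j \<in> {..<n}"
    have "(\<Sum>i<n. M $$ (i,j) * u $ j * cnj (w $ i)) = u $ j * (\<Sum>i<n. cnj (mat_adjoint M $$ (j,i) * w $ i))"
      unfolding sum_distrib_left
      by (rule sum.cong[OF refl], insert j M, auto simp: adjoint_index)
    then show "(\<Sum>i<n. M $$ (i,j) * u $ j * cnj (w $ i)) = u $ j * cnj (\<Sum>i<n. mat_adjoint M $$ (j,i) * w $ i)"
      by simp
  qed
  also have "\<dots> = (\<Sum>j<n. u $ j * cnj ((mat_adjoint M *\<^sub>v w) $ j))"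
    by (rule sum.cong[OF refl], subst mv[OF adjoint_carrier[OF M] w], auto)
  also have "\<dots> = u \<bullet>c (mat_adjoint M *\<^sub>v w)"
  proof -
    have c: "mat_adjoint M *\<^sub>v w \<in> carrier_vec n" using adjoint_carrier[OF M] w by simp
    show ?thesis by (simp only: ex[OF u c])
  qed
  finally show ?thesis .
qed

lemma herm_ipc: "(M::complex mat) \<in> carrier_mat n n \<Longrightarrow> mat_adjoint M = M \<Longrightarrow>
  u \<in> carrier_vec n \<Longrightarrow> w \<in> carrier_vec n \<Longrightarrow> (M *\<^sub>v u) \<bullet>c w = u \<bullet>c (M *\<^sub>v w)"
proof -
  assume a: "M \<in> carrier_mat n n" "mat_adjoint M = M" "u \<in> carrier_vec n" "w \<in> carrier_vec n"
  show ?thesis using adjoint_ipc[OF a(1,3,4)] unfolding a(2) .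
qed

lemma vec_add_diff: "(x::complex vec) \<in> carrier_vec n \<Longrightarrow> y \<in> carrier_vec n \<Longrightarrow> y + (x - y) = x"
  by (intro eq_vecI, auto)

lemma vec_diff_zero: "(x::complex vec) \<in> carrier_vec n \<Longrightarrow> y \<in> carrier_vec n \<Longrightarrow> x - y = 0\<^sub>v n \<Longrightarrow> x = y"
proof -
  assume a: "x \<in> carrier_vec n" "y \<in> carrier_vec n" "x - y = 0\<^sub>v n"
  show "x = y"
  proof (rule eq_vecI)
    fix i assume i: "i < dim_vec y"
    have "(x - y) $ i = 0" using a(3) i a(2) by simp
    then show "x $ i = y $ i" using i a(1,2) by simp
  qed (insert a, auto)
qed

definition proj :: "nat \<Rightarrow> complex mat \<Rightarrow> bool" where
  "proj d R \<longleftrightarrow> R \<in> carrier_mat d d \<and> R * R = R \<and> mat_adjoint R = R"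

lemma proj_idem_vec: "proj d R \<Longrightarrow> v \<in> carrier_vec d \<Longrightarrow> R *\<^sub>v (R *\<^sub>v v) = R *\<^sub>v v"
  unfolding proj_def by (metis assoc_mult_mat_vec)

lemma proj_fix_image: assumes R: "proj d R" and v: "v \<in> carrier_vec d"
  shows "R *\<^sub>v v = v \<longleftrightarrow> v \<in> mat_image d R"
proof
  assume e: "R *\<^sub>v v = v" show "v \<in> mat_image d R" unfolding mat_image_def
    using v e[symmetric] by blast
next
  assume "v \<in> mat_image d R"
  then obtain w where w: "w \<in> carrier_vec d" "v = R *\<^sub>v w" unfolding mat_image_def by auto
  show "R *\<^sub>v v = v" using proj_idem_vec[OF R w(1)] w(2) by simp
qed

lemma proj_ortho: assumes R: "proj d R" and v: "v \<in> carrier_vec d"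
  shows "(R *\<^sub>v v) \<bullet>c (v - R *\<^sub>v v) = 0"
proof -
  have Rc: "R \<in> carrier_mat d d" and h: "mat_adjoint R = R" using R unfolding proj_def by auto
  have Rv: "R *\<^sub>v v \<in> carrier_vec d" using Rc v by simp
  have "(R *\<^sub>v v) \<bullet>c (R *\<^sub>v v) = v \<bullet>c (R *\<^sub>v (R *\<^sub>v v))" by (rule herm_ipc[OF Rc h v Rv])
  also have "\<dots> = v \<bullet>c (R *\<^sub>v v)" using proj_idem_vec[OF R v] by simp
  also have "\<dots> = (R *\<^sub>v v) \<bullet>c v" using herm_ipc[OF Rc h v v] by simp
  finally have e: "(R *\<^sub>v v) \<bullet>c (R *\<^sub>v v) = (R *\<^sub>v v) \<bullet>c v" .
  show ?thesis using ipc_minus_r[OF Rv v Rv] e by simp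
qed

lemma proj_norm: assumes R: "proj d R" and v: "v \<in> carrier_vec d"
  shows "v \<bullet>c v = (R *\<^sub>v v) \<bullet>c (R *\<^sub>v v) + (v - R *\<^sub>v v) \<bullet>c (v - R *\<^sub>v v)"
proof -
  have Rc: "R \<in> carrier_mat d d" using R unfolding proj_def by auto
  define x where "x = R *\<^sub>v v"
  define u where "u = v - R *\<^sub>v v"
  have x: "x \<in> carrier_vec d" and u: "u \<in> carrier_vec d" using Rc v by (auto simp: x_def u_def)
  have vv: "v = x + u" unfolding x_def u_def using vec_add_diff[of v d "R *\<^sub>v v"] Rc v by simp
  have o1: "x \<bullet>c u = 0" using proj_ortho[OF R v] by (simp add: x_def u_def)
  have o2: "u \<bullet>c x = 0" using ipc_swap[OF u x] o1 by simp
  have "v \<bullet>c v = (x + u) \<bullet>c (x + u)" using vv by simp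
  also have "\<dots> = x \<bullet>c x + x \<bullet>c u + (u \<bullet>c x + u \<bullet>c u)"
    using x u by (simp add: ipc_add_l[of _ d] ipc_add_r[of _ d])
  also have "\<dots> = x \<bullet>c x + u \<bullet>c u" using o1 o2 by simp
  finally show ?thesis unfolding x_def u_def .
qed

lemma proj_contract: assumes R: "proj d R" and v: "v \<in> carrier_vec d"
  shows "Re ((R *\<^sub>v v) \<bullet>c (R *\<^sub>v v)) \<le> Re (v \<bullet>c v)"
  using proj_norm[OF R v] ipc_self[of "v - R *\<^sub>v v"] by simp

lemma proj_norm_eq: assumes R: "proj d R" and v: "v \<in> carrier_vec d"
  and e: "Re ((R *\<^sub>v v) \<bullet>c (R *\<^sub>v v)) = Re (v \<bullet>c v)"
  shows "R *\<^sub>v v = v"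
proof -
  have Rc: "R \<in> carrier_mat d d" using R unfolding proj_def by auto
  have u: "v - R *\<^sub>v v \<in> carrier_vec d" using Rc v by simp
  have "Re ((v - R *\<^sub>v v) \<bullet>c (v - R *\<^sub>v v)) = 0" using proj_norm[OF R v] e by simp
  then have "(v - R *\<^sub>v v) \<bullet>c (v - R *\<^sub>v v) = 0"
    using ipc_self_real[of "v - R *\<^sub>v v"] by simp
  then have "v - R *\<^sub>v v = 0\<^sub>v d" using conjugate_square_eq_0_vec[OF u] by simp
  then show ?thesis using vec_diff_zero[of v d "R *\<^sub>v v"] v Rc by simp
qed

lemma mprod_Nil: "mprod_list d [] = 1\<^sub>m d" by (simp add: mprod_list_def)
lemma mprod_Cons: "mprod_list d (M # Ms) = M * mprod_list d Ms" by (simp add: mprod_list_def)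

lemma mprod_carrier: "\<forall>M\<in>set Ms. proj d M \<Longrightarrow> mprod_list d Ms \<in> carrier_mat d d"
  by (induction Ms) (auto simp: mprod_Nil mprod_Cons proj_def)

lemma mprod_contract: "\<forall>M\<in>set Ms. proj d M \<Longrightarrow> v \<in> carrier_vec d \<Longrightarrow>
   Re ((mprod_list d Ms *\<^sub>v v) \<bullet>c (mprod_list d Ms *\<^sub>v v)) \<le> Re (v \<bullet>c v)"
proof (induction Ms)
  case Nil then show ?case by (simp add: mprod_Nil)
next
  case (Cons M Ms)
  have M: "proj d M" and Ms: "\<forall>M\<in>set Ms. proj d M" using Cons.prems by auto
  have Mc: "M \<in> carrier_mat d d" using M by (simp add: proj_def)
  have Pc: "mprod_list d Ms \<in> carrier_mat d d" using mprod_carrier[OF Ms] .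
  have w: "mprod_list d Ms *\<^sub>v v \<in> carrier_vec d" using Pc Cons.prems by simp
  have e: "mprod_list d (M # Ms) *\<^sub>v v = M *\<^sub>v (mprod_list d Ms *\<^sub>v v)"
    unfolding mprod_Cons using Mc Pc Cons.prems by (simp add: assoc_mult_mat_vec)
  show ?case unfolding e using proj_contract[OF M w] Cons.IH[OF Ms Cons.prems(2)] by linarith
qed

lemma mprod_fix: "\<forall>M\<in>set Ms. proj d M \<Longrightarrow> v \<in> carrier_vec d \<Longrightarrow>
   mprod_list d Ms *\<^sub>v v = v \<Longrightarrow> (\<forall>M\<in>set Ms. M *\<^sub>v v = v)"
proof (induction Ms)
  case Nil then show ?case by simp
next
  case (Cons M Ms)
  have M: "proj d M" and Ms: "\<forall>M\<in>set Ms. proj d M" using Cons.prems by auto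
  have v: "v \<in> carrier_vec d" using Cons.prems by simp
  have Mc: "M \<in> carrier_mat d d" using M by (simp add: proj_def)
  have Pc: "mprod_list d Ms \<in> carrier_mat d d" using mprod_carrier[OF Ms] .
  define w where "w = mprod_list d Ms *\<^sub>v v"
  have w: "w \<in> carrier_vec d" using Pc v by (simp add: w_def)
  have e: "M *\<^sub>v w = v"
    using Cons.prems(3) unfolding mprod_Cons w_def using Mc Pc v by (simp add: assoc_mult_mat_vec)
  have n1: "Re (w \<bullet>c w) \<le> Re (v \<bullet>c v)" using mprod_contract[OF Ms v] by (simp add: w_def)
  have n2: "Re ((M *\<^sub>v w) \<bullet>c (M *\<^sub>v w)) \<le> Re (w \<bullet>c w)" by (rule proj_contract[OF M w])
  have "Re ((M *\<^sub>v w) \<bullet>c (M *\<^sub>v w)) = Re (w \<bullet>c w)" using n1 n2 e by simp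
  then have Mw: "M *\<^sub>v w = w" by (rule proj_norm_eq[OF M w])
  then have wv: "w = v" using e by simp
  have "\<forall>M\<in>set Ms. M *\<^sub>v v = v" using Cons.IH[OF Ms v] wv by (simp add: w_def)
  then show ?case using Mw wv by simp
qed

lemma fix_mprod: "\<forall>M\<in>set Ms. proj d M \<Longrightarrow> v \<in> carrier_vec d \<Longrightarrow>
   (\<forall>M\<in>set Ms. M *\<^sub>v v = v) \<Longrightarrow> mprod_list d Ms *\<^sub>v v = v"
proof (induction Ms)
  case Nil then show ?case by (simp add: mprod_Nil)
next
  case (Cons M Ms)
  have M: "proj d M" and Ms: "\<forall>M\<in>set Ms. proj d M" using Cons.prems by auto
  have Mc: "M \<in> carrier_mat d d" using M by (simp add: proj_def)
  have Pc: "mprod_list d Ms \<in> carrier_mat d d" using mprod_carrier[OF Ms] .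
  have "mprod_list d (M # Ms) *\<^sub>v v = M *\<^sub>v (mprod_list d Ms *\<^sub>v v)"
    unfolding mprod_Cons using Mc Pc Cons.prems by (simp add: assoc_mult_mat_vec)
  also have "\<dots> = M *\<^sub>v v" using Cons.IH[OF Ms] Cons.prems by simp
  also have "\<dots> = v" using Cons.prems by simp
  finally show ?case .
qed

lemma det_fix: assumes Ms: "\<forall>M\<in>set Ms. proj d M"
  shows "det (mprod_list d Ms - 1\<^sub>m d) = 0 \<longleftrightarrow>
     (\<exists>v \<in> carrier_vec d. v \<noteq> 0\<^sub>v d \<and> (\<forall>M\<in>set Ms. M *\<^sub>v v = v))"
proof -
  have Pc: "mprod_list d Ms \<in> carrier_mat d d" using mprod_carrier[OF Ms] .
  have c: "mprod_list d Ms - 1\<^sub>m d \<in> carrier_mat d d" by (rule minus_carrier_mat, simp)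
  have eq: "(mprod_list d Ms - 1\<^sub>m d) *\<^sub>v v = 0\<^sub>v d \<longleftrightarrow> (\<forall>M\<in>set Ms. M *\<^sub>v v = v)"
    if v: "v \<in> carrier_vec d" for v
  proof -
    have "(mprod_list d Ms - 1\<^sub>m d) *\<^sub>v v = mprod_list d Ms *\<^sub>v v - v"
      using Pc v by (simp add: minus_mult_distrib_mat_vec[OF Pc _ v])
    then have "(mprod_list d Ms - 1\<^sub>m d) *\<^sub>v v = 0\<^sub>v d \<longleftrightarrow> mprod_list d Ms *\<^sub>v v = v"
      using vec_diff_zero[of "mprod_list d Ms *\<^sub>v v" d v] Pc v by auto
    then show ?thesis using mprod_fix[OF Ms v] fix_mprod[OF Ms v] by blast
  qed
  show ?thesis unfolding det_0_iff_vec_prod_zero[OF c] using eq by blast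
qed

lemma smult_mat_vec: "(A::complex mat) \<in> carrier_mat n n \<Longrightarrow> v \<in> carrier_vec n \<Longrightarrow>
   (k \<cdot>\<^sub>m A) *\<^sub>v v = k \<cdot>\<^sub>v (A *\<^sub>v v)"
  by (intro eq_vecI, auto)

lemma outer_carrier: "outer d psi \<in> carrier_mat d d"
  by (simp add: outer_def)

lemma outer_mult: assumes psi: "psi \<in> carrier_vec d" and u: "u \<in> carrier_vec d"
  shows "outer d psi *\<^sub>v u = (u \<bullet>c psi) \<cdot>\<^sub>v psi"
proof (rule eq_vecI)
  fix i assume "i < dim_vec ((u \<bullet>c psi) \<cdot>\<^sub>v psi)"
  then have i: "i < d" using psi by simp
  have "(outer d psi *\<^sub>v u) $ i = (\<Sum>j\<in>{0..<d}. psi $ i * cnj (psi $ j) * u $ j)"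
    using i u by (simp add: outer_def scalar_prod_def row_def)
  also have "\<dots> = psi $ i * (\<Sum>j\<in>{0..<d}. u $ j * cnj (psi $ j))"
    by (simp add: sum_distrib_left mult_ac)
  also have "\<dots> = ((u \<bullet>c psi) \<cdot>\<^sub>v psi) $ i"
    using i u psi by (simp add: scalar_prod_def)
  finally show "(outer d psi *\<^sub>v u) $ i = ((u \<bullet>c psi) \<cdot>\<^sub>v psi) $ i" .
qed (insert psi, auto simp: outer_def)

lemma quad_form: assumes S: "(S::complex mat) \<in> carrier_mat d d" and psi: "psi \<in> carrier_vec d"
  and v: "v \<in> carrier_vec d"
  shows "((S - k \<cdot>\<^sub>m outer d psi) *\<^sub>v v) \<bullet>c v = (S *\<^sub>v v) \<bullet>c v - k * ((v \<bullet>c psi) * cnj (v \<bullet>c psi))"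
proof -
  have O: "outer d psi \<in> carrier_mat d d" by (rule outer_carrier)
  have "(S - k \<cdot>\<^sub>m outer d psi) *\<^sub>v v = S *\<^sub>v v - (k \<cdot>\<^sub>m outer d psi) *\<^sub>v v"
    by (rule minus_mult_distrib_mat_vec, insert S O v, auto)
  also have "(k \<cdot>\<^sub>m outer d psi) *\<^sub>v v = (k * (v \<bullet>c psi)) \<cdot>\<^sub>v psi"
    using smult_mat_vec[OF O v] outer_mult[OF psi v] by (simp add: smult_smult_assoc)
  finally have e: "(S - k \<cdot>\<^sub>m outer d psi) *\<^sub>v v = S *\<^sub>v v - (k * (v \<bullet>c psi)) \<cdot>\<^sub>v psi" .
  have "((S - k \<cdot>\<^sub>m outer d psi) *\<^sub>v v) \<bullet>c v = (S *\<^sub>v v) \<bullet>c v - (k * (v \<bullet>c psi)) * (psi \<bullet>c v)"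
    unfolding e using S v psi by (simp add: ipc_minus_l[of _ d])
  also have "psi \<bullet>c v = cnj (v \<bullet>c psi)" by (rule ipc_swap[OF psi v])
  finally show ?thesis by (simp add: mult_ac)
qed

lemma cs_arith: fixes a b c t :: real
  assumes c: "c \<ge> 0" and b: "b \<ge> 0" and t: "t = 1 / (c + 1)" and h: "0 \<le> a - 2*t*b + t*t*b*c"
  shows "b \<le> a * (c + 1)"
proof -
  have c1: "c + 1 > 0" using c by simp
  have "0 \<le> (a - 2*t*b + t*t*b*c) * ((c+1)*(c+1))" using h c1 by simp
  also have "\<dots> = a*(c+1)*(c+1) - 2*b*(t*(c+1))*(c+1) + b*c*(t*(c+1))*(t*(c+1))"
    by (simp add: algebra_simps)
  also have "t*(c+1) = 1" using c1 unfolding t by simp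
  also have "a*(c+1)*(c+1) - 2*b*1*(c+1) + b*c*1*1 = a*(c+1)*(c+1) - b*(c+2)"
    by (simp add: algebra_simps)
  finally have "b*(c+2) \<le> a*(c+1)*(c+1)" by simp
  moreover have "b*(c+1) \<le> b*(c+2)" using b by (simp add: mult_left_mono)
  ultimately have "b*(c+1) \<le> (a*(c+1))*(c+1)" by (simp add: mult_ac)
  then show ?thesis using c1 by (simp add: mult_le_cancel_right)
qed

lemma psd_herm: "psd d S \<Longrightarrow> S \<in> carrier_mat d d \<and> mat_adjoint S = S"
  by (simp add: psd_def)

lemma psd_form: "psd d S \<Longrightarrow> v \<in> carrier_vec d \<Longrightarrow> Im ((S *\<^sub>v v) \<bullet>c v) = 0 \<and> Re ((S *\<^sub>v v) \<bullet>c v) \<ge> 0"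
  by (simp add: psd_def)

lemma cs_psd: assumes S: "psd d S" and v: "v \<in> carrier_vec d" and w: "w \<in> carrier_vec d"
  shows "Re (((S *\<^sub>v v) \<bullet>c w) * cnj ((S *\<^sub>v v) \<bullet>c w)) \<le>
     Re ((S *\<^sub>v v) \<bullet>c v) * (Re ((S *\<^sub>v w) \<bullet>c w) + 1)"
proof -
  have Sc: "S \<in> carrier_mat d d" and h: "mat_adjoint S = S" using psd_herm[OF S] by auto
  define \<beta> where "\<beta> = (S *\<^sub>v v) \<bullet>c w"
  define a where "a = Re ((S *\<^sub>v v) \<bullet>c v)"
  define c where "c = Re ((S *\<^sub>v w) \<bullet>c w)"
  define b where "b = Re (\<beta> * cnj \<beta>)"
  define t where "t = 1 / (c + 1)"
  define s where "s = complex_of_real t * \<beta>"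
  have A: "(S *\<^sub>v v) \<bullet>c v = of_real a" using psd_form[OF S v] unfolding a_def by (simp add: complex_eq_iff)
  have C: "(S *\<^sub>v w) \<bullet>c w = of_real c" using psd_form[OF S w] unfolding c_def by (simp add: complex_eq_iff)
  have B2: "(S *\<^sub>v w) \<bullet>c v = cnj \<beta>"
    unfolding \<beta>_def using herm_ipc[OF Sc h w v] ipc_swap[of w d "S *\<^sub>v v"] Sc v w by simp
  have c0: "c \<ge> 0" using psd_form[OF S w] unfolding c_def by simp
  have b0: "b \<ge> 0" unfolding b_def by (simp add: complex_mult_cnj)
  define z where "z = v - s \<cdot>\<^sub>v w"
  have z: "z \<in> carrier_vec d" using v w by (simp add: z_def)
  have sw: "s \<cdot>\<^sub>v w \<in> carrier_vec d" using w by simp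
  have Sv: "S *\<^sub>v v \<in> carrier_vec d" and Sw: "S *\<^sub>v w \<in> carrier_vec d" using Sc v w by auto
  have Sz: "S *\<^sub>v z = S *\<^sub>v v - s \<cdot>\<^sub>v (S *\<^sub>v w)"
    unfolding z_def using mult_minus_distrib_mat_vec[OF Sc v sw] mult_mat_vec[OF Sc w] by simp
  have "(S *\<^sub>v z) \<bullet>c z = (S *\<^sub>v v) \<bullet>c v - cnj s * \<beta> - s * cnj \<beta> + s * cnj s * of_real c"
  proof -
    have ssw: "s \<cdot>\<^sub>v (S *\<^sub>v w) \<in> carrier_vec d" using Sw by simp
    have "(S *\<^sub>v z) \<bullet>c z = (S *\<^sub>v v) \<bullet>c z - (s \<cdot>\<^sub>v (S *\<^sub>v w)) \<bullet>c z"
      unfolding Sz by (rule ipc_minus_l[OF Sv ssw z])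
    also have "(S *\<^sub>v v) \<bullet>c z = (S *\<^sub>v v) \<bullet>c v - (S *\<^sub>v v) \<bullet>c (s \<cdot>\<^sub>v w)"
      unfolding z_def by (rule ipc_minus_r[OF Sv v sw])
    also have "(s \<cdot>\<^sub>v (S *\<^sub>v w)) \<bullet>c z = (s \<cdot>\<^sub>v (S *\<^sub>v w)) \<bullet>c v - (s \<cdot>\<^sub>v (S *\<^sub>v w)) \<bullet>c (s \<cdot>\<^sub>v w)"
      unfolding z_def by (rule ipc_minus_r[OF ssw v sw])
    also have "(S *\<^sub>v v) \<bullet>c (s \<cdot>\<^sub>v w) = cnj s * \<beta>"
      unfolding \<beta>_def by (rule ipc_smult_r[OF Sv w])
    also have "(s \<cdot>\<^sub>v (S *\<^sub>v w)) \<bullet>c v = s * cnj \<beta>"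
      using ipc_smult_l[OF Sw v, of s] B2 by simp
    also have "(s \<cdot>\<^sub>v (S *\<^sub>v w)) \<bullet>c (s \<cdot>\<^sub>v w) = s * (cnj s * of_real c)"
      using ipc_smult_l[OF Sw sw, of s] ipc_smult_r[OF Sw w, of s] C by simp
    finally show ?thesis by (simp add: algebra_simps)
  qed
  also have "\<dots> = of_real (a - 2*t*b + t*t*b*c)"
    unfolding A s_def b_def by (simp add: complex_eq_iff algebra_simps power2_eq_square)
  finally have "(S *\<^sub>v z) \<bullet>c z = of_real (a - 2*t*b + t*t*b*c)" .
  then have "0 \<le> a - 2*t*b + t*t*b*c" using psd_form[OF S z] by simp
  from cs_arith[OF c0 b0 t_def this] show ?thesis unfolding a_def b_def c_def \<beta>_def .
qed

lemma orth_proj: "orth_proj_onto_image d S R \<Longrightarrow> proj d R"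
  by (simp add: orth_proj_onto_image_def proj_def)

lemma proj_sigma: assumes S: "psd d S" and P: "orth_proj_onto_image d S R" and psi: "psi \<in> carrier_vec d"
  shows "S *\<^sub>v (R *\<^sub>v psi) = S *\<^sub>v psi"
proof -
  have Sc: "S \<in> carrier_mat d d" and h: "mat_adjoint S = S" using psd_herm[OF S] by auto
  have R: "proj d R" by (rule orth_proj[OF P])
  have Rc: "R \<in> carrier_mat d d" and hR: "mat_adjoint R = R" using R by (auto simp: proj_def)
  have img: "mat_image d R = mat_image d S" using P by (simp add: orth_proj_onto_image_def)
  have Rp: "R *\<^sub>v psi \<in> carrier_vec d" using Rc psi by simp
  define x where "x = S *\<^sub>v (R *\<^sub>v psi) - S *\<^sub>v psi"
  have x: "x \<in> carrier_vec d" using Sc Rc psi by (simp add: x_def)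
  have Sx: "S *\<^sub>v x \<in> carrier_vec d" using Sc x by simp
  have RSx: "R *\<^sub>v (S *\<^sub>v x) = S *\<^sub>v x"
  proof -
    have "S *\<^sub>v x \<in> mat_image d S" unfolding mat_image_def using x by blast
    then show ?thesis using proj_fix_image[OF R Sx] img by simp
  qed
  have "x \<bullet>c x = (S *\<^sub>v (R *\<^sub>v psi)) \<bullet>c x - (S *\<^sub>v psi) \<bullet>c x"
    unfolding x_def[of] using ipc_minus_l[of "S *\<^sub>v (R *\<^sub>v psi)" d "S *\<^sub>v psi" x] Sc Rp psi x
    by (simp add: x_def[symmetric])
  also have "(S *\<^sub>v (R *\<^sub>v psi)) \<bullet>c x = (R *\<^sub>v psi) \<bullet>c (S *\<^sub>v x)" by (rule herm_ipc[OF Sc h Rp x])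
  also have "\<dots> = psi \<bullet>c (R *\<^sub>v (S *\<^sub>v x))" by (rule herm_ipc[OF Rc hR psi Sx])
  also have "(S *\<^sub>v psi) \<bullet>c x = psi \<bullet>c (S *\<^sub>v x)" by (rule herm_ipc[OF Sc h psi x])
  finally have "x \<bullet>c x = 0" using RSx by simp
  then have "x = 0\<^sub>v d" using conjugate_square_eq_0_vec[OF x] by simp
  then show ?thesis using vec_diff_zero[of "S *\<^sub>v (R *\<^sub>v psi)" d "S *\<^sub>v psi"] Sc Rp psi
    unfolding x_def by simp
qed

lemma psd_sub_imp_fix: assumes S: "psd d S" and P: "orth_proj_onto_image d S R"
  and psi: "psi \<in> carrier_vec d" and e: "e > 0"
  and Q: "psd d (S - complex_of_real e \<cdot>\<^sub>m outer d psi)"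
  shows "R *\<^sub>v psi = psi"
proof -
  have Sc: "S \<in> carrier_mat d d" using psd_herm[OF S] by auto
  have R: "proj d R" by (rule orth_proj[OF P])
  have Rc: "R \<in> carrier_mat d d" and hR: "mat_adjoint R = R" using R by (auto simp: proj_def)
  have Rp: "R *\<^sub>v psi \<in> carrier_vec d" using Rc psi by simp
  define u where "u = psi - R *\<^sub>v psi"
  have u: "u \<in> carrier_vec d" using Rp psi by (simp add: u_def)
  have Ru: "R *\<^sub>v u = 0\<^sub>v d"
  proof -
    have "R *\<^sub>v u = R *\<^sub>v psi - R *\<^sub>v (R *\<^sub>v psi)"
      unfolding u_def by (rule mult_minus_distrib_mat_vec[OF Rc psi Rp])
    also have "\<dots> = R *\<^sub>v psi - R *\<^sub>v psi" using proj_idem_vec[OF R psi] by simp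
    also have "\<dots> = 0\<^sub>v d" using Rp by simp
    finally show ?thesis .
  qed
  have Su: "S *\<^sub>v u = 0\<^sub>v d"
  proof -
    have "S *\<^sub>v u = S *\<^sub>v psi - S *\<^sub>v (R *\<^sub>v psi)"
      unfolding u_def by (rule mult_minus_distrib_mat_vec[OF Sc psi Rp])
    also have "\<dots> = 0\<^sub>v d" using proj_sigma[OF S P psi] Sc psi by simp
    finally show ?thesis .
  qed
  have up: "u \<bullet>c psi = u \<bullet>c u"
  proof -
    have pp: "psi = u + R *\<^sub>v psi" unfolding u_def using psi Rp Rc by (intro eq_vecI, auto)
    have "u \<bullet>c psi = u \<bullet>c u + u \<bullet>c (R *\<^sub>v psi)"
      using ipc_add_r[OF u u Rp] pp by simp
    also have "u \<bullet>c (R *\<^sub>v psi) = (R *\<^sub>v u) \<bullet>c psi" using herm_ipc[OF Rc hR u psi] by simp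
    also have "\<dots> = 0" using Ru psi by simp
    finally show ?thesis by simp
  qed
  have qf: "((S - complex_of_real e \<cdot>\<^sub>m outer d psi) *\<^sub>v u) \<bullet>c u =
       - complex_of_real e * ((u \<bullet>c u) * cnj (u \<bullet>c u))"
    using quad_form[OF Sc psi u, of "complex_of_real e"] Su up u by simp
  have "Re (((S - complex_of_real e \<cdot>\<^sub>m outer d psi) *\<^sub>v u) \<bullet>c u) \<ge> 0"
    using psd_form[OF Q u] by simp
  then have "e * (Re (u \<bullet>c u))^2 \<le> 0"
    unfolding qf using ipc_self[of u] by (simp add: power2_eq_square)
  then have "Re (u \<bullet>c u) = 0" using e
    by (metis mult_pos_pos not_le power2_eq_square zero_less_power2)
  then have "u \<bullet>c u = 0" using ipc_self_real[of u] by simp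
  then have "u = 0\<^sub>v d" using conjugate_square_eq_0_vec[OF u] by simp
  then show ?thesis using vec_diff_zero[of psi d "R *\<^sub>v psi"] psi Rp unfolding u_def by simp
qed

lemma fix_imp_psd_sub: assumes S: "psd d S" and P: "orth_proj_onto_image d S R"
  and psi: "psi \<in> carrier_vec d" and fx: "R *\<^sub>v psi = psi"
  shows "\<exists>\<epsilon>>0. \<forall>e. 0 < e \<and> e \<le> \<epsilon> \<longrightarrow> psd d (S - complex_of_real e \<cdot>\<^sub>m outer d psi)"
proof -
  have Sc: "S \<in> carrier_mat d d" and h: "mat_adjoint S = S" using psd_herm[OF S] by auto
  have R: "proj d R" by (rule orth_proj[OF P])
  have img: "mat_image d R = mat_image d S" using P by (simp add: orth_proj_onto_image_def)
  have "psi \<in> mat_image d S" using proj_fix_image[OF R psi] fx img by simp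
  then obtain w where w: "w \<in> carrier_vec d" and pw: "psi = S *\<^sub>v w" unfolding mat_image_def by auto
  define c where "c = Re ((S *\<^sub>v w) \<bullet>c w)"
  have c0: "c \<ge> 0" using psd_form[OF S w] unfolding c_def by simp
  show ?thesis
  proof (intro exI[of _ "1 / (c + 1)"] conjI allI impI)
    show "0 < 1 / (c + 1)" using c0 by simp
    fix e assume ee: "0 < e \<and> e \<le> 1 / (c + 1)"
    let ?M = "S - complex_of_real e \<cdot>\<^sub>m outer d psi"
    have Mc: "?M \<in> carrier_mat d d" by (rule minus_carrier_mat, simp add: outer_def)
    have herm: "mat_adjoint ?M = ?M"
    proof -
      have "\<forall>i<d. \<forall>j<d. ?M $$ (i,j) = cnj (?M $$ (j,i))"
      proof (intro allI impI)
        fix i j assume i: "i < d" and j: "j < d"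
        have "S $$ (i,j) = cnj (S $$ (j,i))" by (rule hermitian_index[OF Sc h i j])
        then show "?M $$ (i,j) = cnj (?M $$ (j,i))" using i j Sc by (simp add: outer_def)
      qed
      then show ?thesis using hermitian_iff[OF Mc] by blast
    qed
    have form: "Im ((?M *\<^sub>v v) \<bullet>c v) = 0 \<and> Re ((?M *\<^sub>v v) \<bullet>c v) \<ge> 0" if v: "v \<in> carrier_vec d" for v
    proof -
      define \<beta> where "\<beta> = (S *\<^sub>v v) \<bullet>c w"
      have vb: "v \<bullet>c psi = \<beta>" unfolding pw \<beta>_def using herm_ipc[OF Sc h v w] by simp
      have cs: "Re (\<beta> * cnj \<beta>) \<le> Re ((S *\<^sub>v v) \<bullet>c v) * (c + 1)"
        using cs_psd[OF S v w] unfolding \<beta>_def c_def .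
      have q: "(?M *\<^sub>v v) \<bullet>c v = (S *\<^sub>v v) \<bullet>c v - complex_of_real e * (\<beta> * cnj \<beta>)"
        using quad_form[OF Sc psi v] vb by simp
      have b0: "Re (\<beta> * cnj \<beta>) \<ge> 0" and bi: "Im (\<beta> * cnj \<beta>) = 0" by (auto simp: complex_mult_cnj)
      have ec: "e * (c + 1) \<le> 1" using ee c0 by (simp add: field_simps)
      have "Re (\<beta> * cnj \<beta>) * (e * (c + 1)) \<le> Re (\<beta> * cnj \<beta>) * 1"
        by (rule mult_left_mono[OF ec b0])
      then have "e * Re (\<beta> * cnj \<beta>) \<le> Re (\<beta> * cnj \<beta>) / (c + 1)"
        using c0 by (simp add: field_simps del: complex_mult_cnj)
      also have "\<dots> \<le> Re ((S *\<^sub>v v) \<bullet>c v)" using cs c0 by (simp add: divide_simps)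
      finally have "e * Re (\<beta> * cnj \<beta>) \<le> Re ((S *\<^sub>v v) \<bullet>c v)" .
      then show ?thesis unfolding q using psd_form[OF S v] bi by simp
    qed
    show "psd d ?M" unfolding psd_def using Mc herm form by blast
  qed
qed

lemma zero_sub: "(S::complex mat) \<in> carrier_mat d d \<Longrightarrow> S - (0::complex) \<cdot>\<^sub>m outer d psi = S"
  by (intro eq_matI, auto simp: outer_def)

lemma normalize_vec: assumes v: "(v::complex vec) \<in> carrier_vec d" and nz: "v \<noteq> 0\<^sub>v d"
  shows "\<exists>k. (k \<cdot>\<^sub>v v) \<bullet>c (k \<cdot>\<^sub>v v) = 1"
proof -
  define r where "r = Re (v \<bullet>c v)"
  have vv: "v \<bullet>c v = of_real r" unfolding r_def by (rule ipc_self_real)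
  have "v \<bullet>c v \<noteq> 0" using conjugate_square_eq_0_vec[OF v] nz by simp
  then have "r \<noteq> 0" using vv by auto
  then have r0: "r > 0" using ipc_self[of v] unfolding r_def by (simp add: less_le)
  define k where "k = complex_of_real (1 / sqrt r)"
  have "(k \<cdot>\<^sub>v v) \<bullet>c (k \<cdot>\<^sub>v v) = k * (cnj k * (v \<bullet>c v))"
    using v by (simp add: ipc_smult_l[of _ d] ipc_smult_r[of _ d])
  also have "\<dots> = of_real ((1 / sqrt r) * (1 / sqrt r) * r)" unfolding k_def vv
    by (simp only: complex_cnj_complex_of_real of_real_mult mult.assoc)
  also have "(1 / sqrt r) * (1 / sqrt r) * r = 1" using r0
    by (simp add: field_simps)
  finally show ?thesis by auto
qed

theorem lemma2:
  fixes n d :: nat and A X :: "nat \<Rightarrow> nat"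
    and \<sigma> R :: "nat list \<Rightarrow> nat list \<Rightarrow> complex mat"
    and ord :: "(nat \<Rightarrow> nat \<Rightarrow> nat) \<Rightarrow> (nat list \<times> nat list) list"
  assumes "n \<ge> 1" and "d \<ge> 1"
    and "\<forall>i<n. A i \<ge> 1 \<and> X i \<ge> 1"
    and "no_signaling_assemblage n A X d \<sigma>"
    and "\<forall>a x. valid_idx n A a \<longrightarrow> valid_idx n X x \<longrightarrow> orth_proj_onto_image d (\<sigma> a x) (R a x)"
    and "\<forall>f. local_det n A X f \<longrightarrow> distinct (ord f) \<and> set (ord f) = I_L n A X f"
  shows "LHS_subtractable n A X d \<sigma> \<longleftrightarrow>
    (\<exists>f. local_det n A X f \<and>
       det (mprod_list d (map (\<lambda>(a,x). R a x) (ord f)) - 1\<^sub>m d) = 0)"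
proof -
  have psdS: "\<And>a x. valid_idx n A a \<Longrightarrow> valid_idx n X x \<Longrightarrow> psd d (\<sigma> a x)"
    using assms(4) unfolding no_signaling_assemblage_def by blast
  have OP: "\<And>a x. valid_idx n A a \<Longrightarrow> valid_idx n X x \<Longrightarrow> orth_proj_onto_image d (\<sigma> a x) (R a x)"
    using assms(5) by blast
  have IL: "\<And>f a x. (a,x) \<in> I_L n A X f \<longleftrightarrow> valid_idx n A a \<and> valid_idx n X x \<and> p_L n f a x = 1"
    unfolding I_L_def p_L_def by auto
  have pL01: "\<And>f a x. p_L n f a x = 0 \<or> p_L n f a x = 1" unfolding p_L_def by auto
  define G where "G f \<longleftrightarrow> (\<exists>psi\<in>carrier_vec d. psi \<bullet>c psi = 1 \<and>
      (\<forall>p\<in>I_L n A X f. R (fst p) (snd p) *\<^sub>v psi = psi))" for f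
  have C1: "LHS_subtractable n A X d \<sigma> \<longleftrightarrow> (\<exists>f. local_det n A X f \<and> G f)"
  proof
    assume "LHS_subtractable n A X d \<sigma>"
    then obtain \<epsilon> :: real and psi f where e: "\<epsilon> > 0" and psi: "psi \<in> carrier_vec d"
      and n1: "psi \<bullet>c psi = 1" and f: "local_det n A X f"
      and P: "\<forall>a x. valid_idx n A a \<longrightarrow> valid_idx n X x \<longrightarrow>
              psd d (\<sigma> a x - (complex_of_real \<epsilon> * p_L n f a x) \<cdot>\<^sub>m outer d psi)"
      unfolding LHS_subtractable_def by blast
    have "\<forall>p\<in>I_L n A X f. R (fst p) (snd p) *\<^sub>v psi = psi"
    proof
      fix p assume p: "p \<in> I_L n A X f"
      obtain a x where px: "p = (a,x)" by (cases p)
      have va: "valid_idx n A a" and vx: "valid_idx n X x" and pl: "p_L n f a x = 1"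
        using p IL unfolding px by auto
      have "psd d (\<sigma> a x - (complex_of_real \<epsilon> * p_L n f a x) \<cdot>\<^sub>m outer d psi)" using P va vx by blast
      then have "psd d (\<sigma> a x - complex_of_real \<epsilon> \<cdot>\<^sub>m outer d psi)" using pl by simp
      from psd_sub_imp_fix[OF psdS[OF va vx] OP[OF va vx] psi e this]
      show "R (fst p) (snd p) *\<^sub>v psi = psi" unfolding px by simp
    qed
    then show "\<exists>f. local_det n A X f \<and> G f" unfolding G_def using f psi n1 by blast
  next
    assume "\<exists>f. local_det n A X f \<and> G f"
    then obtain f psi where f: "local_det n A X f" and psi: "psi \<in> carrier_vec d"
      and n1: "psi \<bullet>c psi = 1" and fx: "\<forall>p\<in>I_L n A X f. R (fst p) (snd p) *\<^sub>v psi = psi"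
      unfolding G_def by blast
    have fin: "finite (I_L n A X f)" using assms(6) f by (metis List.finite_set)
    have "\<forall>p\<in>I_L n A X f. \<exists>\<epsilon>>0. \<forall>e. 0 < e \<and> e \<le> \<epsilon> \<longrightarrow>
          psd d (\<sigma> (fst p) (snd p) - complex_of_real e \<cdot>\<^sub>m outer d psi)"
    proof
      fix p assume p: "p \<in> I_L n A X f"
      obtain a x where px: "p = (a,x)" by (cases p)
      have va: "valid_idx n A a" and vx: "valid_idx n X x"
        using p IL unfolding px by auto
      show "\<exists>\<epsilon>>0. \<forall>e. 0 < e \<and> e \<le> \<epsilon> \<longrightarrow>
          psd d (\<sigma> (fst p) (snd p) - complex_of_real e \<cdot>\<^sub>m outer d psi)"
      proof -
        have "R a x *\<^sub>v psi = psi" using fx p unfolding px by auto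
        then show ?thesis using fix_imp_psd_sub[OF psdS[OF va vx] OP[OF va vx] psi] unfolding px by simp
      qed
    qed
    then obtain E where E: "\<forall>p\<in>I_L n A X f. E p > 0 \<and> (\<forall>e. 0 < e \<and> e \<le> E p \<longrightarrow>
          psd d (\<sigma> (fst p) (snd p) - complex_of_real e \<cdot>\<^sub>m outer d psi))"
      by (metis (no_types, lifting) bchoice)
    define \<epsilon> where "\<epsilon> = Min (insert 1 (E ` I_L n A X f))"
    have finE: "finite (insert 1 (E ` I_L n A X f))" using fin by simp
    have e0: "\<epsilon> > 0" unfolding \<epsilon>_def using finE E by (subst Min_gr_iff, auto)
    have eE: "\<And>p. p \<in> I_L n A X f \<Longrightarrow> \<epsilon> \<le> E p" unfolding \<epsilon>_def using finE by (intro Min_le, auto)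
    have "\<forall>a x. valid_idx n A a \<longrightarrow> valid_idx n X x \<longrightarrow>
              psd d (\<sigma> a x - (complex_of_real \<epsilon> * p_L n f a x) \<cdot>\<^sub>m outer d psi)"
    proof (intro allI impI)
      fix a x assume va: "valid_idx n A a" and vx: "valid_idx n X x"
      show "psd d (\<sigma> a x - (complex_of_real \<epsilon> * p_L n f a x) \<cdot>\<^sub>m outer d psi)"
      proof (cases "p_L n f a x = 0")
        case True
        have "\<sigma> a x \<in> carrier_mat d d" using psd_herm[OF psdS[OF va vx]] by simp
        then show ?thesis using True psdS[OF va vx] zero_sub by simp
      next
        case False
        then have pl: "p_L n f a x = 1" using pL01 by blast
        then have p: "(a,x) \<in> I_L n A X f" using IL va vx by blast
        have "psd d (\<sigma> a x - complex_of_real \<epsilon> \<cdot>\<^sub>m outer d psi)"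
          using E p eE[OF p] e0 by auto
        then show ?thesis using pl by simp
      qed
    qed
    then show "LHS_subtractable n A X d \<sigma>" unfolding LHS_subtractable_def
      using e0 psi n1 f by blast
  qed
  have C2: "det (mprod_list d (map (\<lambda>(a,x). R a x) (ord f)) - 1\<^sub>m d) = 0 \<longleftrightarrow> G f"
    if f: "local_det n A X f" for f
  proof -
    let ?Ms = "map (\<lambda>(a,x). R a x) (ord f)"
    have so: "set (ord f) = I_L n A X f" using assms(6) f by blast
    have Ms: "\<forall>M\<in>set ?Ms. proj d M"
    proof
      fix M assume "M \<in> set ?Ms"
      then obtain a x where ax: "(a,x) \<in> I_L n A X f" and M: "M = R a x" using so by auto
      have va: "valid_idx n A a" and vx: "valid_idx n X x" using ax IL by auto
      show "proj d M" unfolding M by (rule orth_proj[OF OP[OF va vx]])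
    qed
    have eqv: "(\<forall>M\<in>set ?Ms. M *\<^sub>v v = v) \<longleftrightarrow> (\<forall>p\<in>I_L n A X f. R (fst p) (snd p) *\<^sub>v v = v)" for v
      using so by force
    have Rc: "\<And>p. p \<in> I_L n A X f \<Longrightarrow> R (fst p) (snd p) \<in> carrier_mat d d"
    proof -
      fix p assume p: "p \<in> I_L n A X f"
      obtain a x where px: "p = (a,x)" by (cases p)
      have va: "valid_idx n A a" and vx: "valid_idx n X x" using p IL unfolding px by auto
      show "R (fst p) (snd p) \<in> carrier_mat d d" using orth_proj[OF OP[OF va vx]] unfolding px proj_def by simp
    qed
    show ?thesis unfolding det_fix[OF Ms] eqv
    proof
      assume "\<exists>v\<in>carrier_vec d. v \<noteq> 0\<^sub>v d \<and> (\<forall>p\<in>I_L n A X f. R (fst p) (snd p) *\<^sub>v v = v)"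
      then obtain v where v: "v \<in> carrier_vec d" and nz: "v \<noteq> 0\<^sub>v d"
        and fx: "\<forall>p\<in>I_L n A X f. R (fst p) (snd p) *\<^sub>v v = v" by blast
      obtain k where k: "(k \<cdot>\<^sub>v v) \<bullet>c (k \<cdot>\<^sub>v v) = 1" using normalize_vec[OF v nz] by blast
      have "\<forall>p\<in>I_L n A X f. R (fst p) (snd p) *\<^sub>v (k \<cdot>\<^sub>v v) = k \<cdot>\<^sub>v v"
      proof
        fix p assume p: "p \<in> I_L n A X f"
        have "R (fst p) (snd p) *\<^sub>v (k \<cdot>\<^sub>v v) = k \<cdot>\<^sub>v (R (fst p) (snd p) *\<^sub>v v)"
          by (rule mult_mat_vec[OF Rc[OF p] v])
        then show "R (fst p) (snd p) *\<^sub>v (k \<cdot>\<^sub>v v) = k \<cdot>\<^sub>v v" using fx p by simp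
      qed
      then show "G f" unfolding G_def using k v by (intro bexI[of _ "k \<cdot>\<^sub>v v"], auto)
    next
      assume "G f"
      then obtain psi where psi: "psi \<in> carrier_vec d" and n1: "psi \<bullet>c psi = 1"
        and fx: "\<forall>p\<in>I_L n A X f. R (fst p) (snd p) *\<^sub>v psi = psi" unfolding G_def by blast
      have "psi \<noteq> 0\<^sub>v d" using n1 conjugate_square_eq_0_vec[OF psi] by auto
      then show "\<exists>v\<in>carrier_vec d. v \<noteq> 0\<^sub>v d \<and> (\<forall>p\<in>I_L n A X f. R (fst p) (snd p) *\<^sub>v v = v)"
        using psi fx by blast
    qed
  qed
  show ?thesis unfolding C1 using C2 by blast
qed

end
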